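(* Let $d,k,\ell,T$ be positive integers with $2k\le d$, let $\mathbf{X}_1,\dots,\mathbf{X}_T\in\mathbb{R}^{d\times\ell}$ and $t_1,\dots,t_T\in(0,1]$. Let $(\mathbf{H}^{(n)},\mathbf{Y}^{(n)},\boldsymbol{\Theta}^{(n)})_{n\ge 0}$ be the iterates produced by the Geodesic Subspace Estimation algorithm (described in the context) from any initialization with $[\mathbf{H}^{(0)}\ \mathbf{Y}^{(0)}]\in\mathrm{St}(d,2k)$ and $\boldsymbol{\Theta}^{(0)}$ real diagonal, and let $\mathbf{U}^{(n)}(t)=\mathbf{H}^{(n)}\cos(\boldsymbol{\Theta}^{(n)}t)+\mathbf{Y}^{(n)}\sin(\boldsymbol{\Theta}^{(n)}t)$. Then for every $n\ge 1$, $$\mathcal{L}(\mathbf{U}^{(n)})\le \mathcal{L}(\mathbf{U}^{(n-1)}),$$ i.e. the loss is monotonically non-increasing along the iterates.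
   Context: $\mathrm{St}(d,p)=\{\mathbf{Q}\in\mathbb{R}^{d\times p}:\mathbf{Q}^\top\mathbf{Q}=\mathbf{I}_p\}$. For $\mathbf{H},\mathbf{Y}\in\mathbb{R}^{d\times k}$ and a real diagonal $k\times k$ matrix $\boldsymbol{\Theta}=\mathrm{diag}(\theta_1,\dots,\theta_k)$, set $\mathbf{U}(t)=\mathbf{H}\cos(\boldsymbol{\Theta}t)+\mathbf{Y}\sin(\boldsymbol{\Theta}t)$ (matrix cosine/sine of a diagonal matrix act entrywise on the diagonal) and define the loss $$\mathcal{L}(\mathbf{U})=\mathcal{L}(\mathbf{H},\mathbf{Y},\boldsymbol{\Theta})=-\sum_{i=1}^T\|\mathbf{X}_i^\top\mathbf{U}(t_i)\|_F^2$$ (which, when $[\mathbf{H}\ \mathbf{Y}]\in\mathrm{St}(d,2k)$, equals $\min_{\mathbf{G}_i}\sum_i\|\mathbf{X}_i-\mathbf{U}(t_i)\mathbf{G}_i\|_F^2$ minus the constant $\sum_i\|\mathbf{X}_i\|_F^2$). For $a\in\mathbb{R},p>0$, $\mathrm{mod}(a,p)=a-p\lfloor a/p\rfloor\in[0,p)$; $\arctan2(y,x)$ is the angle of $(x,y)$ measured counter-clockwise from the positive $x$-axis. Algorithm (Geodesic Subspace Estimation), with $M\ge1$ inner iterations. For $n=1,2,\dots$: (i) ($\mathbf{H},\mathbf{Y}$ update) Let $\mathbf{U}_i=\mathbf{U}^{(n-1)}(t_i)$, $\mathbf{G}_i=\mathbf{U}_i^\top\mathbf{X}_i$, $\mathbf{M}=\sum_{i=1}^T[\mathbf{X}_i\mathbf{G}_i^\top\cos(\boldsymbol{\Theta}^{(n-1)}t_i)\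 \ \mathbf{X}_i\mathbf{G}_i^\top\sin(\boldsymbol{\Theta}^{(n-1)}t_i)]\in\mathbb{R}^{d\times 2k}$, take a thin SVD $\mathbf{M}=\mathbf{W}\boldsymbol{\Sigma}\mathbf{V}^\top$ and set $[\mathbf{H}^{(n)}\ \mathbf{Y}^{(n)}]=\mathbf{W}\mathbf{V}^\top$. (ii) ($\boldsymbol{\Theta}$ update) With $\mathbf{H}=\mathbf{H}^{(n)},\mathbf{Y}=\mathbf{Y}^{(n)}$, for each $j=1,\dots,k$ and $i=1,\dots,T$ put $\alpha_{i,j}=[\mathbf{H}^\top\mathbf{X}_i\mathbf{X}_i^\top\mathbf{H}]_{jj}$, $\beta_{i,j}=[\mathbf{Y}^\top\mathbf{X}_i\mathbf{X}_i^\top\mathbf{H}]_{jj}$, $\gamma_{i,j}=[\mathbf{Y}^\top\mathbf{X}_i\mathbf{X}_i^\top\mathbf{Y}]_{jj}$, $\phi_{i,j}=\arctan2(\beta_{i,j},(\alpha_{i,j}-\gamma_{i,j})/2)$, $r_{i,j}=\sqrt{((\alpha_{i,j}-\gamma_{i,j})/2)^2+\beta_{i,j}^2}$. Define $f'_{i,j}(\theta)=2r_{i,j}t_i\sin(2\theta t_i-\phi_{i,j})$ and the curvature $w_{i,j}(\theta)=f'_{i,j}(\theta)\big/\big(\mathrm{mod}(\theta-\tfrac{\phi_{i,j}}{2t_i}+\tfrac{\pi}{2t_i},\tfrac{2\pi}{2t_i})-\tfrac{\pi}{2t_i}\big)$ when the denominator is nonzero, and $w_{i,j}(\theta)=4t_i^2r_{i,j}$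 when $\theta\in\{(\phi_{i,j}+2\pi m)/(2t_i):m\in\mathbb{Z}\}$. Starting from $\theta_j^{(n,0)}=\theta_j^{(n-1)}$, for $m=1,\dots,M$ set $\theta_j^{(n,m)}=\theta_j^{(n,m-1)}-\frac{\sum_i f'_{i,j}(\theta_j^{(n,m-1)})}{\sum_i w_{i,j}(\theta_j^{(n,m-1)})}$ (with the convention $\theta_j^{(n,m)}=\theta_j^{(n,m-1)}$ if the denominator is $0$). Finally $\boldsymbol{\Theta}^{(n)}=\mathrm{diag}(\theta_1^{(n,M)},\dots,\theta_k^{(n,M)})$. *)

theory Defs
  imports "HOL-Analysis.Analysis"
begin

text \<open>Dimensions d, k, l are finite
  index types 'd, 'k, 'l; the 2k columns of [H Y] are indexed by the sum type 'k + 'k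
  (Inl j = j-th column of H, Inr j = j-th column of Y).  The diagonal matrix Theta
  is represented by the vector of its diagonal entries.\<close>

definition fro_norm :: "real^'n^'m \<Rightarrow> real" where
  "fro_norm A = sqrt (\<Sum>i\<in>UNIV. \<Sum>j\<in>UNIV. (A$i$j)^2)"

definition rmod :: "real \<Rightarrow> real \<Rightarrow> real" where
  "rmod a p = a - p * of_int \<lfloor>a / p\<rfloor>"

definition arctan2 :: "real \<Rightarrow> real \<Rightarrow> real" where
  "arctan2 y x = Arg2pi (Complex x y)"

definition hcat :: "real^'k^'d \<Rightarrow> real^'k^'d \<Rightarrow> real^('k + 'k)^'d" where
  "hcat H Y = (\<chi> r c. case c of Inl j \<Rightarrow> H$r$j | Inr j \<Rightarrow> Y$r$j)"

definition left_block :: "real^('k + 'k)^'d \<Rightarrow> real^'k^'d" where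
  "left_block A = (\<chi> r j. A$r$(Inl j))"

definition right_block :: "real^('k + 'k)^'d \<Rightarrow> real^'k^'d" where
  "right_block A = (\<chi> r j. A$r$(Inr j))"

definition stiefel :: "real^'p^'d \<Rightarrow> bool" where
  "stiefel Q \<longleftrightarrow> transpose Q ** Q = mat 1"

definition cosd :: "real^'k \<Rightarrow> real \<Rightarrow> real^'k^'k" where
  "cosd \<theta> s = (\<chi> a b. if a = b then cos (\<theta>$a * s) else 0)"

definition sind :: "real^'k \<Rightarrow> real \<Rightarrow> real^'k^'k" where
  "sind \<theta> s = (\<chi> a b. if a = b then sin (\<theta>$a * s) else 0)"

definition U_at :: "real^'k^'d \<Rightarrow> real^'k^'d \<Rightarrow> real^'k \<Rightarrow> real \<Rightarrow> real^'k^'d" where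
  "U_at H Y \<theta> s = H ** cosd \<theta> s + Y ** sind \<theta> s"

definition gse_loss ::
  "nat \<Rightarrow> (nat \<Rightarrow> real^'l^'d) \<Rightarrow> (nat \<Rightarrow> real) \<Rightarrow> real^'k^'d \<Rightarrow> real^'k^'d \<Rightarrow> real^'k \<Rightarrow> real" where
  "gse_loss T X t H Y \<theta> = - (\<Sum>i<T. (fro_norm (transpose (X i) ** U_at H Y \<theta> (t i)))^2)"

definition gse_M ::
  "nat \<Rightarrow> (nat \<Rightarrow> real^'l^'d) \<Rightarrow> (nat \<Rightarrow> real) \<Rightarrow> real^'k^'d \<Rightarrow> real^'k^'d \<Rightarrow> real^'k \<Rightarrow> real^('k+'k)^'d" where
  "gse_M T X t H Y \<theta> =
     (\<Sum>i<T. let G = transpose (U_at H Y \<theta> (t i)) ** X i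
             in hcat (X i ** transpose G ** cosd \<theta> (t i)) (X i ** transpose G ** sind \<theta> (t i)))"

definition thin_svd :: "real^'p^'d \<Rightarrow> real^'p^'d \<Rightarrow> real^'p^'p \<Rightarrow> real^'p^'p \<Rightarrow> bool" where
  "thin_svd A W S V \<longleftrightarrow>
     transpose W ** W = mat 1 \<and> transpose V ** V = mat 1 \<and>
     (\<forall>a b. a \<noteq> b \<longrightarrow> S$a$b = 0) \<and> (\<forall>a. 0 \<le> S$a$a) \<and>
     A = W ** S ** transpose V"

definition alpha_ij :: "real^'k^'d \<Rightarrow> real^'l^'d \<Rightarrow> 'k \<Rightarrow> real" where
  "alpha_ij H Xi j = (transpose H ** Xi ** transpose Xi ** H)$j$j"
definition beta_ij :: "real^'k^'d \<Rightarrow> real^'k^'d \<Rightarrow> real^'l^'d \<Rightarrow> 'k \<Rightarrow> real" where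
  "beta_ij H Y Xi j = (transpose Y ** Xi ** transpose Xi ** H)$j$j"
definition gamma_ij :: "real^'k^'d \<Rightarrow> real^'l^'d \<Rightarrow> 'k \<Rightarrow> real" where
  "gamma_ij Y Xi j = (transpose Y ** Xi ** transpose Xi ** Y)$j$j"

definition phi_ij :: "real^'k^'d \<Rightarrow> real^'k^'d \<Rightarrow> real^'l^'d \<Rightarrow> 'k \<Rightarrow> real" where
  "phi_ij H Y Xi j = arctan2 (beta_ij H Y Xi j) ((alpha_ij H Xi j - gamma_ij Y Xi j) / 2)"
definition r_ij :: "real^'k^'d \<Rightarrow> real^'k^'d \<Rightarrow> real^'l^'d \<Rightarrow> 'k \<Rightarrow> real" where
  "r_ij H Y Xi j = sqrt (((alpha_ij H Xi j - gamma_ij Y Xi j) / 2)^2 + (beta_ij H Y Xi j)^2)"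

definition fprime :: "real \<Rightarrow> real \<Rightarrow> real \<Rightarrow> real \<Rightarrow> real" where
  "fprime r \<phi> ti \<theta> = 2 * r * ti * sin (2 * \<theta> * ti - \<phi>)"

text \<open>curvature w_{i,j}(theta); the denominator vanishes exactly when
  theta \<in> {(phi + 2 pi m)/(2 t) : m \<in> Z}\<close>
definition curv :: "real \<Rightarrow> real \<Rightarrow> real \<Rightarrow> real \<Rightarrow> real" where
  "curv r \<phi> ti \<theta> =
     (let den = rmod (\<theta> - \<phi> / (2 * ti) + pi / (2 * ti)) (2 * pi / (2 * ti)) - pi / (2 * ti)
      in if den = 0 then 4 * ti^2 * r else fprime r \<phi> ti \<theta> / den)"

definition theta_step ::
  "nat \<Rightarrow> (nat \<Rightarrow> real^'l^'d) \<Rightarrow> (nat \<Rightarrow> real) \<Rightarrow> real^'k^'d \<Rightarrow> real^'k^'d \<Rightarrow> 'k \<Rightarrow> real \<Rightarrow> real" where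
  "theta_step T X t H Y j \<theta> =
     (let num = (\<Sum>i<T. fprime (r_ij H Y (X i) j) (phi_ij H Y (X i) j) (t i) \<theta>);
          den = (\<Sum>i<T. curv (r_ij H Y (X i) j) (phi_ij H Y (X i) j) (t i) \<theta>)
      in if den = 0 then \<theta> else \<theta> - num / den)"

definition theta_update ::
  "nat \<Rightarrow> nat \<Rightarrow> (nat \<Rightarrow> real^'l^'d) \<Rightarrow> (nat \<Rightarrow> real) \<Rightarrow> real^'k^'d \<Rightarrow> real^'k^'d \<Rightarrow> real^'k \<Rightarrow> real^'k" where
  "theta_update M T X t H Y \<theta> = (\<chi> j. (theta_step T X t H Y j ^^ M) (\<theta>$j))"

text \<open>One outer iteration n-1 -> n of Geodesic Subspace Estimation (the thin SVD is any
  thin SVD of M).\<close>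
definition gse_step ::
  "nat \<Rightarrow> nat \<Rightarrow> (nat \<Rightarrow> real^'l^'d) \<Rightarrow> (nat \<Rightarrow> real) \<Rightarrow>
   real^'k^'d \<Rightarrow> real^'k^'d \<Rightarrow> real^'k \<Rightarrow> real^'k^'d \<Rightarrow> real^'k^'d \<Rightarrow> real^'k \<Rightarrow> bool" where
  "gse_step M T X t H0 Y0 \<theta>0 H1 Y1 \<theta>1 \<longleftrightarrow>
     (\<exists>W S V. thin_svd (gse_M T X t H0 Y0 \<theta>0) W S V \<and>
              hcat H1 Y1 = W ** transpose V) \<and>
     \<theta>1 = theta_update M T X t H1 Y1 \<theta>0"

end

theory Submission
  imports Defs "HOL-Analysis.Analysis"
begin


lemma sin_minus_xcos_nonneg:
  fixes s :: real assumes "0 \<le> s" "s \<le> pi"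
  shows "0 \<le> sin s - s * cos s"
proof -
  have "(\<lambda>x. sin x - x * cos x) 0 \<le> (\<lambda>x. sin x - x * cos x) s"
  proof (rule DERIV_nonneg_imp_nondecreasing[OF assms(1)])
    fix x assume "0 \<le> x" "x \<le> s"
    have "DERIV (\<lambda>x. sin x - x * cos x) x :> (cos x - (1 * cos x + x * (- sin x)))"
      by (auto intro!: derivative_eq_intros)
    moreover have "0 \<le> cos x - (1 * cos x + x * (- sin x))"
      using sin_ge_zero[of x] \<open>0 \<le> x\<close> \<open>x \<le> s\<close> assms by simp
    ultimately show "\<exists>y. DERIV (\<lambda>x. sin x - x * cos x) x :> y \<and> 0 \<le> y" by blast
  qed
  then show ?thesis by simp
qed

lemma sinc_decr:
  fixes s s' :: real assumes "0 < s" "s \<le> s'" "s' \<le> pi"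
  shows "sin s' / s' \<le> sin s / s"
proof -
  have "(\<lambda>x. sin x / x) s' \<le> (\<lambda>x. sin x / x) s"
  proof (rule DERIV_nonpos_imp_nonincreasing[OF assms(2)])
    fix x assume x: "s \<le> x" "x \<le> s'"
    have "DERIV (\<lambda>x. sin x / x) x :> (cos x * x - sin x * 1) / (x * x)"
      using x assms by (auto intro!: derivative_eq_intros)
    moreover have "(cos x * x - sin x * 1) / (x * x) \<le> 0"
      using sin_minus_xcos_nonneg[of x] x assms
      by (intro divide_nonpos_nonneg) (auto simp: algebra_simps)
    ultimately show "\<exists>y. DERIV (\<lambda>x. sin x / x) x :> y \<and> y \<le> 0" by blast
  qed
  then show ?thesis by simp
qed

lemma maj_pos:
  fixes v u :: real assumes v: "0 < v" "v \<le> pi" and c: "c = sin v / v"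
  shows "cos v + c * v^2 / 2 \<le> cos u + c * u^2 / 2"
proof -
  define f where "f x = cos x + c * x^2 / 2" for x
  have c0: "0 \<le> c" using c v sin_ge_zero[of v] by simp
  have D: "DERIV f x :> (- sin x + c * x)" for x
    unfolding f_def by (auto intro!: derivative_eq_intros)
  have pos: "f v \<le> f u" if "0 \<le> u" for u
  proof (cases "u \<le> v")
    case True
    have "f v \<le> f u"
    proof (rule DERIV_nonpos_imp_nonincreasing[OF True])
      fix x assume x: "u \<le> x" "x \<le> v"
      have "- sin x + c * x \<le> 0"
      proof (cases "x = 0")
        case False
        then have "x > 0" using x that by simp
        have "sin v / v \<le> sin x / x" using sinc_decr[of x v] x v \<open>x>0\<close> by simp
        then have "c * x \<le> sin x" using \<open>x > 0\<close> c by (simp add: field_simps)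
        then show ?thesis by simp
      qed simp
      then show "\<exists>y. DERIV f x :> y \<and> y \<le> 0" using D by blast
    qed
    then show ?thesis .
  next
    case False
    have fvpi: "f v \<le> f pi"
    proof (rule DERIV_nonneg_imp_nondecreasing[OF v(2)])
      fix x assume x: "v \<le> x" "x \<le> pi"
      have "sin x / x \<le> sin v / v" using sinc_decr[of v x] x v by simp
      then have "sin x / x \<le> c" using c by simp
        then have "sin x \<le> c * x" using x v by (simp add: pos_divide_le_eq)
      then show "\<exists>y. DERIV f x :> y \<and> 0 \<le> y" using D by (metis add.commute diff_ge_0_iff_ge uminus_add_conv_diff)
    qed
    show ?thesis
    proof (cases "u \<le> pi")
      case True
      show ?thesis
      proof (rule DERIV_nonneg_imp_nondecreasing[of v u f])
        show "v \<le> u" using False by simp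
        fix x assume x: "v \<le> x" "x \<le> u"
        have "sin x / x \<le> sin v / v" using sinc_decr[of v x] x v True by simp
        then have "sin x / x \<le> c" using c by simp
        then have "sin x \<le> c * x" using x v by (simp add: pos_divide_le_eq)
        then show "\<exists>y. DERIV f x :> y \<and> 0 \<le> y" using D by (metis add.commute diff_ge_0_iff_ge uminus_add_conv_diff)
      qed
    next
      case False
      have "pi^2 \<le> u^2" using False pi_gt_zero by (intro power_mono) auto
      then have "c * pi^2 \<le> c * u^2" using c0 by (rule mult_left_mono)
      then have "f pi \<le> f u" unfolding f_def cos_pi using cos_ge_minus_one[of u] by linarith
      then show ?thesis using fvpi by simp
    qed
  qed
  show ?thesis
  proof (cases "0 \<le> u")
    case True then show ?thesis using pos[of u] by (simp add: f_def)
  next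
    case False then show ?thesis using pos[of "-u"] by (simp add: f_def)
  qed
qed

lemma maj_zero:
  fixes u :: real shows "cos 0 + 1 * 0^2 / 2 \<le> cos u + 1 * u^2 / 2"
proof -
  define f where "f x = cos x + x^2 / 2" for x :: real
  have D: "DERIV f x :> (- sin x + x)" for x
    unfolding f_def by (auto intro!: derivative_eq_intros)
  have "f 0 \<le> f u" if "0 \<le> u" for u
  proof (rule DERIV_nonneg_imp_nondecreasing[OF that])
    fix x assume "0 \<le> x" "x \<le> u"
    then have "sin x \<le> x" using sin_x_le_x by simp
    then show "\<exists>y. DERIV f x :> y \<and> 0 \<le> y" using D by (metis add.commute diff_ge_0_iff_ge uminus_add_conv_diff)
  qed
  then have "f 0 \<le> f u" for u by (cases "0 \<le> u") (auto simp: f_def dest: spec[of _ "-u"] , metis cos_minus f_def le_cases neg_0_le_iff_le power2_minus)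
  then show ?thesis by (simp add: f_def)
qed




lemma maj_full:
  fixes v u :: real assumes "-pi \<le> v" "v < pi"
  defines "c \<equiv> (if v = 0 then 1 else sin v / v)"
  shows "0 \<le> c" "c * v = sin v" "cos v + c * v^2 / 2 \<le> cos u + c * u^2 / 2"
proof -
  show "c * v = sin v" by (simp add: c_def)
  show "0 \<le> c"
  proof (cases "v = 0")
    case False
    show ?thesis
    proof (cases "v > 0")
      case True then show ?thesis using sin_ge_zero[of v] assms by (simp add: c_def)
    next
      case f: False
      then have "0 \<le> sin (-v)" using sin_ge_zero[of "-v"] assms False by simp
      then show ?thesis using f False by (simp add: c_def divide_nonpos_neg)
    qed
  qed (simp add: c_def)
  show "cos v + c * v^2 / 2 \<le> cos u + c * u^2 / 2"
  proof (cases "v = 0")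
    case True then show ?thesis using maj_zero[of u] by (simp add: c_def)
  next
    case False
    show ?thesis
    proof (cases "v > 0")
      case True then show ?thesis using maj_pos[of v "sin v / v" u] assms False by (simp add: c_def)
    next
      case f: False
      then have "c = sin (-v) / (-v)" using False by (simp add: c_def)
      then show ?thesis using maj_pos[of "-v" "sin (-v) / (-v)" u] assms False f by simp
    qed
  qed
qed

lemma maj_theta:
  fixes r \<phi> ti \<theta>0 \<theta> :: real
  assumes r: "0 \<le> r" and ti: "0 < ti"
  shows "0 \<le> curv r \<phi> ti \<theta>0"
    "- r * cos (2 * \<theta> * ti - \<phi>) \<le> - r * cos (2 * \<theta>0 * ti - \<phi>)
       + fprime r \<phi> ti \<theta>0 * (\<theta> - \<theta>0) + curv r \<phi> ti \<theta>0 / 2 * (\<theta> - \<theta>0)^2"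
proof -
  define x where "x = \<theta>0 - \<phi> / (2 * ti) + pi / (2 * ti)"
  define p where "p = 2 * pi / (2 * ti)"
  define k where "k = \<lfloor>x / p\<rfloor>"
  define den where "den = rmod x p - pi / (2 * ti)"
  define v where "v = 2 * ti * den"
  define u0 where "u0 = 2 * \<theta>0 * ti - \<phi>"
  have p0: "0 < p" using ti by (simp add: p_def)
  have k1: "p * of_int k \<le> x" using p0 floor_divide_lower[OF p0, of x] by (simp add: k_def mult.commute distrib_left)
  have k2: "x < p * of_int k + p" using p0 floor_divide_upper[OF p0, of x] by (simp add: k_def mult.commute distrib_left)
  have rm: "rmod x p = x - p * of_int k" by (simp add: rmod_def k_def)
  have v2: "v = 2 * ti * (x - p * of_int k - pi / (2 * ti))" by (simp add: v_def den_def rm)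
  have vu: "v = u0 - 2 * pi * of_int k"
    using ti unfolding v2 by (simp add: x_def p_def u0_def field_simps)
  have e1: "2 * ti * (p * of_int k) = 2 * pi * of_int k" "2 * ti * p = 2*pi" using ti by (simp_all add: p_def)
  have e2: "2 * ti * x = u0 + pi" using ti by (simp add: x_def u0_def field_simps)
  have "2 * ti * (p * of_int k) \<le> 2 * ti * x" using k1 ti by simp
  then have vlo: "-pi \<le> v" unfolding vu e1 e2 by simp
  have "2 * ti * x < 2 * ti * (p * of_int k + p)" using k2 ti by simp
  then have vhi: "v < pi" unfolding vu distrib_left e1 e2 by simp
  define c where "c = (if v = 0 then 1 else sin v / v)"
  note M = maj_full[OF vlo vhi, folded c_def]
  have su: "sin u0 = sin v" "cos u0 = cos v"
    by (simp_all add: vu sin_diff cos_diff)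
  have curv_eq: "curv r \<phi> ti \<theta>0 = 4 * ti^2 * r * c"
  proof (cases "den = 0")
    case True
    then have "v = 0" by (simp add: v_def)
    then show ?thesis using True
      by (simp add: curv_def Let_def den_def x_def p_def c_def)
  next
    case False
    then have "v \<noteq> 0" using ti by (simp add: v_def)
    have "curv r \<phi> ti \<theta>0 = fprime r \<phi> ti \<theta>0 / den"
      using False by (simp add: curv_def Let_def den_def x_def p_def)
    also have "\<dots> = 2 * r * ti * sin v / (v / (2 * ti))"
      using su ti by (simp add: fprime_def u0_def v_def)
    also have "\<dots> = 4 * ti^2 * r * c" using \<open>v \<noteq> 0\<close> ti by (simp add: c_def field_simps power2_eq_square)
    finally show ?thesis .
  qed
  show "0 \<le> curv r \<phi> ti \<theta>0" unfolding curv_eq using M(1) r by simp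
  define u' where "u' = 2 * \<theta> * ti - \<phi> - 2 * pi * of_int k"
  have cu: "cos (2 * \<theta> * ti - \<phi>) = cos u'" by (simp add: u'_def cos_diff)
  have d: "u' - v = 2 * ti * (\<theta> - \<theta>0)" by (simp add: u'_def vu u0_def algebra_simps)
  have "r * (cos v + c * v^2 / 2) \<le> r * (cos u' + c * u'^2 / 2)"
    using M(3)[of u'] r by (rule mult_left_mono)
  then have f1: "r * cos v + (r * c) * v^2 / 2 \<le> r * cos u' + (r * c) * u'^2 / 2"
    by (simp add: distrib_left mult.assoc)
  have eq: "(r * c) * u'^2 / 2 = (r * c) * v^2 / 2 + r * c * v * (u' - v) + r * c / 2 * (u' - v)^2"
    by (simp add: power2_eq_square algebra_simps)
  from f1 eq have "- r * cos u' \<le> - r * cos v + r * c * v * (u' - v) + r * c / 2 * (u' - v)^2"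
    by linarith
  then show "- r * cos (2 * \<theta> * ti - \<phi>) \<le> - r * cos (2 * \<theta>0 * ti - \<phi>)
       + fprime r \<phi> ti \<theta>0 * (\<theta> - \<theta>0) + curv r \<phi> ti \<theta>0 / 2 * (\<theta> - \<theta>0)^2"
    unfolding cu curv_eq fprime_def d
    using su by (simp add: M(2)[symmetric] u0_def power2_eq_square algebra_simps)
qed




definition Gfun :: "nat \<Rightarrow> (nat \<Rightarrow> real^'l^'d) \<Rightarrow> (nat \<Rightarrow> real) \<Rightarrow> real^'k^'d \<Rightarrow> real^'k^'d \<Rightarrow> 'k \<Rightarrow> real \<Rightarrow> real" where
  "Gfun T X t H Y j \<theta> = (\<Sum>i<T. - r_ij H Y (X i) j * cos (2 * \<theta> * t i - phi_ij H Y (X i) j))"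

lemma r_nonneg: "0 \<le> r_ij H Y Xi j" by (simp add: r_ij_def)

lemma step_decr:
  assumes t: "\<forall>i<T. 0 < t i"
  shows "Gfun T X t H Y j (theta_step T X t H Y j \<theta>) \<le> Gfun T X t H Y j \<theta>"
proof -
  define F where "F = (\<Sum>i<T. fprime (r_ij H Y (X i) j) (phi_ij H Y (X i) j) (t i) \<theta>)"
  define W where "W = (\<Sum>i<T. curv (r_ij H Y (X i) j) (phi_ij H Y (X i) j) (t i) \<theta>)"
  have W0: "0 \<le> W" unfolding W_def
    using t by (intro sum_nonneg maj_theta(1)[OF r_nonneg]) auto
  show ?thesis
  proof (cases "W = 0")
    case True
    then show ?thesis by (simp add: theta_step_def Let_def W_def[symmetric])
  next
    case False
    then have Wp: "0 < W" using W0 by simp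
    define d where "d = - F / W"
    have st: "theta_step T X t H Y j \<theta> = \<theta> + d"
      using False by (simp add: theta_step_def Let_def W_def[symmetric] F_def[symmetric] d_def)
    have "Gfun T X t H Y j (\<theta> + d) \<le> (\<Sum>i<T. - r_ij H Y (X i) j * cos (2 * \<theta> * t i - phi_ij H Y (X i) j)
       + fprime (r_ij H Y (X i) j) (phi_ij H Y (X i) j) (t i) \<theta> * d
       + curv (r_ij H Y (X i) j) (phi_ij H Y (X i) j) (t i) \<theta> / 2 * d^2)"
      unfolding Gfun_def
    proof (rule sum_mono)
      fix i assume "i \<in> {..<T}"
      then have "- r_ij H Y (X i) j * cos (2 * (\<theta> + d) * t i - phi_ij H Y (X i) j) \<le>
        - r_ij H Y (X i) j * cos (2 * \<theta> * t i - phi_ij H Y (X i) j)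
       + fprime (r_ij H Y (X i) j) (phi_ij H Y (X i) j) (t i) \<theta> * ((\<theta> + d) - \<theta>)
       + curv (r_ij H Y (X i) j) (phi_ij H Y (X i) j) (t i) \<theta> / 2 * ((\<theta> + d) - \<theta>)^2"
        by (intro maj_theta(2)) (simp_all add: r_nonneg t)
      then show "- r_ij H Y (X i) j * cos (2 * (\<theta> + d) * t i - phi_ij H Y (X i) j) \<le>
        - r_ij H Y (X i) j * cos (2 * \<theta> * t i - phi_ij H Y (X i) j)
       + fprime (r_ij H Y (X i) j) (phi_ij H Y (X i) j) (t i) \<theta> * d
       + curv (r_ij H Y (X i) j) (phi_ij H Y (X i) j) (t i) \<theta> / 2 * d^2" by simp
    qed
    also have "\<dots> = Gfun T X t H Y j \<theta> + F * d + W / 2 * d^2"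
      unfolding Gfun_def F_def W_def sum_distrib_right sum_divide_distrib sum.distrib[symmetric] by simp
    also have "\<dots> = Gfun T X t H Y j \<theta> - F^2 / (2 * W)"
      using Wp by (simp add: d_def power2_eq_square field_simps)
    also have "\<dots> \<le> Gfun T X t H Y j \<theta>" using Wp by simp
    finally show ?thesis using st by simp
  qed
qed

lemma iter_decr:
  assumes t: "\<forall>i<T. 0 < t i"
  shows "Gfun T X t H Y j ((theta_step T X t H Y j ^^ m) \<theta>) \<le> Gfun T X t H Y j \<theta>"
proof (induction m)
  case (Suc m)
  then show ?case using step_decr[OF t, of X H Y j "(theta_step T X t H Y j ^^ m) \<theta>"] by simp
qed simp




lemma mul_cosd: "(H ** cosd \<theta> s)$r$j = H$r$j * cos (\<theta>$j * s)"
  by (simp add: matrix_matrix_mult_def cosd_def if_distrib if_distribR cong: if_cong)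
lemma mul_sind: "(H ** sind \<theta> s)$r$j = H$r$j * sin (\<theta>$j * s)"
  by (simp add: matrix_matrix_mult_def sind_def if_distrib if_distribR cong: if_cong)

lemma fro_sq: "(fro_norm A)^2 = (\<Sum>i\<in>UNIV. \<Sum>j\<in>UNIV. (A$i$j)^2)"
  unfolding fro_norm_def by (simp add: sum_nonneg)

lemma XU_entry:
  "(transpose Xi ** U_at H Y \<theta> s)$l$j =
     (transpose Xi ** H)$l$j * cos (\<theta>$j * s) + (transpose Xi ** Y)$l$j * sin (\<theta>$j * s)"
  by (simp add: U_at_def matrix_add_ldistrib matrix_mul_assoc mul_cosd mul_sind)

lemma TtT_entry: "(transpose A ** B)$a$b = (\<Sum>r\<in>UNIV. A$r$a * B$r$b)"
  by (simp add: matrix_matrix_mult_def transpose_def)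

lemma alpha_eq: "alpha_ij H Xi j = (\<Sum>l\<in>UNIV. ((transpose Xi ** H)$l$j)^2)"
proof -
  have "transpose H ** Xi ** transpose Xi ** H = transpose (transpose Xi ** H) ** (transpose Xi ** H)"
    by (simp add: matrix_transpose_mul matrix_mul_assoc)
  then show ?thesis by (simp add: alpha_ij_def TtT_entry power2_eq_square)
qed
lemma gamma_eq: "gamma_ij Y Xi j = (\<Sum>l\<in>UNIV. ((transpose Xi ** Y)$l$j)^2)"
proof -
  have "transpose Y ** Xi ** transpose Xi ** Y = transpose (transpose Xi ** Y) ** (transpose Xi ** Y)"
    by (simp add: matrix_transpose_mul matrix_mul_assoc)
  then show ?thesis by (simp add: gamma_ij_def TtT_entry power2_eq_square)
qed
lemma beta_eq: "beta_ij H Y Xi j = (\<Sum>l\<in>UNIV. (transpose Xi ** Y)$l$j * (transpose Xi ** H)$l$j)"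
proof -
  have "transpose Y ** Xi ** transpose Xi ** H = transpose (transpose Xi ** Y) ** (transpose Xi ** H)"
    by (simp add: matrix_transpose_mul matrix_mul_assoc)
  then show ?thesis by (simp add: beta_ij_def TtT_entry)
qed

lemma polar:
  fixes A B :: real
  shows "sqrt (A^2 + B^2) * cos (arctan2 B A) = A" "sqrt (A^2 + B^2) * sin (arctan2 B A) = B"
  using cos_Arg2pi[of "Complex A B"] sin_Arg2pi[of "Complex A B"]
  by (simp_all add: arctan2_def complex_norm)

lemma col_term:
  "(\<Sum>l\<in>UNIV. ((transpose Xi ** U_at H Y \<theta> s)$l$j)^2) =
     (alpha_ij H Xi j + gamma_ij Y Xi j) / 2
     + r_ij H Y Xi j * cos (2 * (\<theta>$j) * s - phi_ij H Y Xi j)"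
proof -
  define c where "c = cos (\<theta>$j * s)"
  define sn where "sn = sin (\<theta>$j * s)"
  define a where "a = alpha_ij H Xi j"
  define b where "b = beta_ij H Y Xi j"
  define g where "g = gamma_ij Y Xi j"
  have "(\<Sum>l\<in>UNIV. ((transpose Xi ** U_at H Y \<theta> s)$l$j)^2)
     = (\<Sum>l\<in>UNIV. ((transpose Xi ** H)$l$j)^2 * c^2 + 2 * c * sn * ((transpose Xi ** Y)$l$j * (transpose Xi ** H)$l$j)
           + ((transpose Xi ** Y)$l$j)^2 * sn^2)"
    by (rule sum.cong) (simp_all add: XU_entry c_def sn_def power2_eq_square algebra_simps)
  also have "\<dots> = a * c^2 + 2 * c * sn * b + g * sn^2"
    by (simp add: sum.distrib sum_distrib_left sum_distrib_right a_def b_def g_def alpha_eq beta_eq gamma_eq)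
  finally have e1: "(\<Sum>l\<in>UNIV. ((transpose Xi ** U_at H Y \<theta> s)$l$j)^2) = a * c^2 + 2 * c * sn * b + g * sn^2" .
  have cs: "c^2 + sn^2 = 1" by (simp add: c_def sn_def)
  have c2: "cos (2 * (\<theta>$j) * s) = c^2 - sn^2" "sin (2 * (\<theta>$j) * s) = 2 * sn * c"
    using cos_double[of "\<theta>$j * s"] sin_double[of "\<theta>$j * s"] by (simp_all add: c_def sn_def mult.assoc)
  have rc: "r_ij H Y Xi j * cos (phi_ij H Y Xi j) = (a - g) / 2"
    "r_ij H Y Xi j * sin (phi_ij H Y Xi j) = b"
    using polar[of "(a - g)/2" b] by (simp_all add: r_ij_def phi_ij_def a_def b_def g_def)
  have "r_ij H Y Xi j * cos (2 * (\<theta>$j) * s - phi_ij H Y Xi j)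
        = cos (2 * (\<theta>$j) * s) * (r_ij H Y Xi j * cos (phi_ij H Y Xi j))
          + sin (2 * (\<theta>$j) * s) * (r_ij H Y Xi j * sin (phi_ij H Y Xi j))"
    by (simp add: cos_diff algebra_simps)
  also have "\<dots> = (c^2 - sn^2) * ((a - g) / 2) + 2 * sn * c * b" by (simp only: c2 rc)
  finally have e2: "r_ij H Y Xi j * cos (2 * (\<theta>$j) * s - phi_ij H Y Xi j) = (c^2 - sn^2) * ((a - g) / 2) + 2 * sn * c * b" .
  have "a * c^2 + 2 * c * sn * b + g * sn^2 = (a + g) / 2 * (c^2 + sn^2) + (c^2 - sn^2) * ((a - g) / 2) + 2 * sn * c * b"
    by (simp add: field_simps)
  then show ?thesis unfolding e1 e2 cs a_def g_def by simp
qed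

lemma loss_decomp:
  "gse_loss T X t H Y \<theta> =
     (\<Sum>j\<in>UNIV. \<Sum>i<T. - (alpha_ij H (X i) j + gamma_ij Y (X i) j) / 2) + (\<Sum>j\<in>UNIV. Gfun T X t H Y j (\<theta>$j))"
proof -
  have "gse_loss T X t H Y \<theta> = - (\<Sum>i<T. \<Sum>j\<in>UNIV. \<Sum>l\<in>UNIV. ((transpose (X i) ** U_at H Y \<theta> (t i))$l$j)^2)"
    unfolding gse_loss_def fro_sq by (subst sum.swap[of _ UNIV UNIV]) (rule refl)
  also have "\<dots> = - (\<Sum>i<T. \<Sum>j\<in>UNIV. (alpha_ij H (X i) j + gamma_ij Y (X i) j) / 2
     + r_ij H Y (X i) j * cos (2 * (\<theta>$j) * t i - phi_ij H Y (X i) j))"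
    by (simp only: col_term)
  also have "\<dots> = (\<Sum>j\<in>UNIV. \<Sum>i<T. - (alpha_ij H (X i) j + gamma_ij Y (X i) j) / 2) + (\<Sum>j\<in>UNIV. Gfun T X t H Y j (\<theta>$j))"
    unfolding Gfun_def sum_negf[symmetric] sum.distrib[symmetric]
    by (subst sum.swap) (intro sum.cong refl; simp add: field_simps)
  finally show ?thesis .
qed

lemma step2:
  assumes t: "\<forall>i<T. 0 < t i"
  shows "gse_loss T X t H Y (theta_update M T X t H Y \<theta>) \<le> gse_loss T X t H Y \<theta>"
  unfolding loss_decomp theta_update_def vec_lambda_beta
  by (intro add_left_mono sum_mono iter_decr[OF t])




definition fip :: "real^'n^'m \<Rightarrow> real^'n^'m \<Rightarrow> real" where
  "fip A B = (\<Sum>i\<in>UNIV. \<Sum>j\<in>UNIV. A$i$j * B$i$j)"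

lemma fro_fip: "(fro_norm A)^2 = fip A A"
  unfolding fro_sq fip_def by (simp add: power2_eq_square)

lemma swap3: "(\<Sum>i\<in>A. \<Sum>j\<in>B. \<Sum>k\<in>C. f i j k) = (\<Sum>k\<in>C. \<Sum>j\<in>B. \<Sum>i\<in>A. (f i j k :: real))"
proof -
  have "(\<Sum>i\<in>A. \<Sum>j\<in>B. \<Sum>k\<in>C. f i j k) = (\<Sum>i\<in>A. \<Sum>k\<in>C. \<Sum>j\<in>B. f i j k)"
    by (rule sum.cong[OF refl], rule sum.swap)
  also have "\<dots> = (\<Sum>k\<in>C. \<Sum>i\<in>A. \<Sum>j\<in>B. f i j k)" by (rule sum.swap)
  also have "\<dots> = (\<Sum>k\<in>C. \<Sum>j\<in>B. \<Sum>i\<in>A. f i j k)" by (rule sum.cong[OF refl], rule sum.swap)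
  finally show ?thesis .
qed

lemma fip_add_right: "fip A (B + C) = fip A B + fip A C"
  by (simp add: fip_def distrib_left sum.distrib)
lemma fip_sum_left: "fip (sum f S) C = (\<Sum>i\<in>S. fip (f i) C)"
proof -
  have "fip (sum f S) C = (\<Sum>i\<in>UNIV. \<Sum>j\<in>UNIV. \<Sum>n\<in>S. f n $ i $ j * C $ i $ j)"
    unfolding fip_def sum_component sum_distrib_right ..
  also have "\<dots> = (\<Sum>i\<in>UNIV. \<Sum>n\<in>S. \<Sum>j\<in>UNIV. f n $ i $ j * C $ i $ j)"
    by (rule sum.cong[OF refl], rule sum.swap)
  also have "\<dots> = (\<Sum>n\<in>S. \<Sum>i\<in>UNIV. \<Sum>j\<in>UNIV. f n $ i $ j * C $ i $ j)"
    by (rule sum.swap)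
  finally show ?thesis unfolding fip_def .
qed

lemma fip_mult: "fip (A ** B) C = fip B (transpose A ** C)"
proof -
  have "fip (A ** B) C = (\<Sum>i\<in>UNIV. \<Sum>j\<in>UNIV. \<Sum>k\<in>UNIV. A$i$k * B$k$j * C$i$j)"
    by (simp add: fip_def matrix_matrix_mult_def sum_distrib_right)
  also have "\<dots> = (\<Sum>k\<in>UNIV. \<Sum>j\<in>UNIV. \<Sum>i\<in>UNIV. A$i$k * B$k$j * C$i$j)"
    by (rule swap3)
  also have "\<dots> = fip B (transpose A ** C)"
    by (simp add: fip_def matrix_matrix_mult_def transpose_def sum_distrib_right sum_distrib_left mult_ac)
  finally show ?thesis .
qed

lemma fip_mult2: "fip A (B ** C) = fip (A ** transpose C) B"
proof -
  have "fip A (B ** C) = (\<Sum>i\<in>UNIV. \<Sum>j\<in>UNIV. \<Sum>k\<in>UNIV. A$i$j * B$i$k * C$k$j)"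
    by (simp add: fip_def matrix_matrix_mult_def sum_distrib_left mult_ac)
  also have "\<dots> = (\<Sum>i\<in>UNIV. \<Sum>k\<in>UNIV. \<Sum>j\<in>UNIV. A$i$j * B$i$k * C$k$j)"
    by (rule sum.cong[OF refl]) (rule sum.swap)
  also have "\<dots> = fip (A ** transpose C) B"
    by (simp add: fip_def matrix_matrix_mult_def transpose_def sum_distrib_right sum_distrib_left mult_ac)
  finally show ?thesis .
qed

lemma transpose_cosd: "transpose (cosd \<theta> s) = cosd \<theta> s"
  by (simp add: transpose_def cosd_def vec_eq_iff eq_commute)
lemma transpose_sind: "transpose (sind \<theta> s) = sind \<theta> s"
  by (simp add: transpose_def sind_def vec_eq_iff eq_commute)

lemma fip_hcat: "fip (hcat P Q) (hcat H Y) = fip P H + fip Q Y"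
proof -
  have "fip (hcat P Q) (hcat H Y) = (\<Sum>i\<in>UNIV. \<Sum>j\<in>UNIV. P$i$j * H$i$j) + (\<Sum>i\<in>UNIV. \<Sum>j\<in>UNIV. Q$i$j * Y$i$j)"
    unfolding fip_def hcat_def sum.distrib[symmetric]
    by (rule sum.cong[OF refl]) (simp add: sum.Plus[of UNIV UNIV, simplified] o_def sum.distrib)
  then show ?thesis by (simp add: fip_def)
qed

lemma fip_expand: "fip A (transpose X ** (H ** c)) = fip (X ** A ** transpose c) H"
proof -
  have "fip A (transpose X ** (H ** c)) = fip (X ** A) (H ** c)" by (rule fip_mult[symmetric])
  also have "\<dots> = fip (X ** A ** transpose c) H" by (rule fip_mult2)
  finally show ?thesis .
qed

lemma key_ident:
  "(\<Sum>i<T. fip (transpose (X i) ** U_at H Y \<theta> (t i)) (transpose (X i) ** U_at H' Y' \<theta> (t i)))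
    = fip (gse_M T X t H Y \<theta>) (hcat H' Y')"
proof -
  define A where "A i = transpose (X i) ** U_at H Y \<theta> (t i)" for i
  have "fip (gse_M T X t H Y \<theta>) (hcat H' Y') =
     (\<Sum>i<T. fip (X i ** A i ** cosd \<theta> (t i)) H' + fip (X i ** A i ** sind \<theta> (t i)) Y')"
    unfolding gse_M_def fip_sum_left Let_def A_def
    by (simp add: fip_hcat matrix_transpose_mul)
  also have "\<dots> = (\<Sum>i<T. fip (A i) (transpose (X i) ** U_at H' Y' \<theta> (t i)))"
    by (rule sum.cong[OF refl])
      (simp only: U_at_def matrix_add_ldistrib fip_add_right fip_expand transpose_cosd transpose_sind)
  finally show ?thesis by (simp add: A_def)
qed

lemma colnorm1:
  fixes A :: "real^'p^'d"
  assumes "transpose A ** A = mat 1"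
  shows "norm (column a A) = 1"
proof -
  have "(transpose A ** A)$a$a = column a A \<bullet> column a A"
    by (simp add: matrix_mult_transpose_dot_column)
  then have "column a A \<bullet> column a A = 1" using assms by (simp add: mat_def)
  then show ?thesis by (simp add: norm_eq_sqrt_inner)
qed

lemma diag_le1:
  fixes A B :: "real^'p^'d"
  assumes "transpose A ** A = mat 1" "transpose B ** B = mat 1"
  shows "(transpose A ** B)$a$a \<le> 1"
proof -
  have "(transpose A ** B)$a$a = column a A \<bullet> column a B"
    by (simp add: matrix_matrix_mult_def transpose_def column_def inner_vec_def mult.commute)
  also have "\<dots> \<le> norm (column a A) * norm (column a B)" by (rule norm_cauchy_schwarz)
  also have "\<dots> = 1" using colnorm1[OF assms(1)] colnorm1[OF assms(2)] by simp
  finally show ?thesis .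
qed

lemma fip_diag:
  assumes "\<forall>a b. a \<noteq> b \<longrightarrow> S$a$b = 0"
  shows "fip S Z = (\<Sum>a\<in>UNIV. S$a$a * Z$a$a)"
  unfolding fip_def
proof (rule sum.cong[OF refl])
  fix a
  have "(\<Sum>j\<in>UNIV. S$a$j * Z$a$j) = (\<Sum>j\<in>UNIV. if j = a then S$a$a * Z$a$a else 0)"
    by (rule sum.cong[OF refl]) (use assms in auto)
  then show "(\<Sum>j\<in>UNIV. S$a$j * Z$a$j) = S$a$a * Z$a$a" by simp
qed

lemma procrustes:
  fixes Q :: "real^'p^'d"
  assumes svd: "thin_svd A W S V" and Q: "transpose Q ** Q = mat 1"
  shows "fip A Q \<le> fip A (W ** transpose V)"
proof -
  from svd have W: "transpose W ** W = mat 1" and V: "transpose V ** V = mat 1"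
    and D: "\<forall>a b. a \<noteq> b \<longrightarrow> S$a$b = 0" and P: "\<forall>a. 0 \<le> S$a$a"
    and A: "A = W ** S ** transpose V" by (auto simp: thin_svd_def)
  have gen: "fip A B = fip S (transpose W ** (B ** V))" for B
  proof -
    have "fip A B = fip (W ** S) (B ** V)" unfolding A by (rule fip_mult2[of "W ** S" B V, symmetric])
    also have "\<dots> = fip S (transpose W ** (B ** V))" by (rule fip_mult)
    finally show ?thesis .
  qed
  have QV: "transpose (Q ** V) ** (Q ** V) = mat 1"
  proof -
    have "transpose (Q ** V) ** (Q ** V) = transpose V ** ((transpose Q ** Q) ** V)"
      by (simp add: matrix_transpose_mul matrix_mul_assoc)
    then show ?thesis using Q V by simp
  qed
  have "fip A Q = (\<Sum>a\<in>UNIV. S$a$a * (transpose W ** (Q ** V))$a$a)"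
    unfolding gen fip_diag[OF D] ..
  also have "\<dots> \<le> (\<Sum>a\<in>UNIV. S$a$a * 1)"
    by (intro sum_mono mult_left_mono diag_le1[OF W QV] P[rule_format])
  also have "\<dots> = fip A (W ** transpose V)"
  proof -
    have "transpose W ** (W ** transpose V ** V) = (transpose W ** W) ** (transpose V ** V)"
      by (simp add: matrix_mul_assoc)
    then have "transpose W ** (W ** transpose V ** V) = mat 1" using W V by simp
    then show ?thesis unfolding gen fip_diag[OF D] by (simp add: mat_def)
  qed
  finally show ?thesis .
qed

lemma svd_stiefel:
  assumes "thin_svd A W S V"
  shows "transpose (W ** transpose V) ** (W ** transpose V) = mat 1"
proof -
  from assms have W: "transpose W ** W = mat 1" and V: "transpose V ** V = mat 1"
    by (auto simp: thin_svd_def)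
  have "orthogonal_matrix V" using V by (simp add: orthogonal_matrix)
  then have V2: "V ** transpose V = mat 1" by (simp add: orthogonal_matrix_def)
  have "transpose (W ** transpose V) ** (W ** transpose V) = V ** (transpose W ** W) ** transpose V"
    by (simp add: matrix_transpose_mul matrix_mul_assoc)
  also have "\<dots> = mat 1" using W V2 by simp
  finally show ?thesis .
qed

lemma concave_fip: "- fip B B \<le> fip A A - 2 * fip A B"
proof -
  have "fip A A - 2 * fip A B + fip B B = (\<Sum>i\<in>UNIV. \<Sum>j\<in>UNIV. (A$i$j - B$i$j)^2)"
    by (simp add: fip_def power2_eq_square algebra_simps sum.distrib sum_subtractf sum_distrib_left)
  also have "\<dots> \<ge> 0" by (intro sum_nonneg) auto
  finally show ?thesis by linarith
qed

lemma step1: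
  assumes svd: "thin_svd (gse_M T X t H Y \<theta>) W S V"
    and new: "hcat H' Y' = W ** transpose V"
    and old: "stiefel (hcat H Y)"
  shows "gse_loss T X t H' Y' \<theta> \<le> gse_loss T X t H Y \<theta>"
proof -
  define A where "A i = transpose (X i) ** U_at H Y \<theta> (t i)" for i
  define B where "B i = transpose (X i) ** U_at H' Y' \<theta> (t i)" for i
  have L1: "gse_loss T X t H' Y' \<theta> = (\<Sum>i<T. - fip (B i) (B i))"
    by (simp add: gse_loss_def B_def fro_fip sum_negf)
  have L0: "gse_loss T X t H Y \<theta> = - (\<Sum>i<T. fip (A i) (A i))"
    by (simp add: gse_loss_def A_def fro_fip)
  have "(\<Sum>i<T. - fip (B i) (B i)) \<le> (\<Sum>i<T. fip (A i) (A i) - 2 * fip (A i) (B i))"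
    by (intro sum_mono concave_fip)
  also have "\<dots> = (\<Sum>i<T. fip (A i) (A i)) - 2 * fip (gse_M T X t H Y \<theta>) (hcat H' Y')"
    using key_ident[where T=T and X=X and H=H and Y=Y and \<theta>=\<theta> and t=t and H'=H' and Y'=Y'] by (simp add: A_def B_def sum_subtractf sum_distrib_left[symmetric])
  also have "\<dots> \<le> (\<Sum>i<T. fip (A i) (A i)) - 2 * fip (gse_M T X t H Y \<theta>) (hcat H Y)"
    using procrustes[OF svd, of "hcat H Y"] old new by (simp add: stiefel_def)
  also have "\<dots> = - (\<Sum>i<T. fip (A i) (A i))"
    using key_ident[where T=T and X=X and H=H and Y=Y and \<theta>=\<theta> and t=t and H'=H and Y'=Y] by (simp add: A_def)
  finally show ?thesis using L0 L1 by simp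
qed




theorem theorem1:
  fixes X :: "nat \<Rightarrow> real^'l::finite^'d::finite"
    and t :: "nat \<Rightarrow> real"
    and H Y :: "nat \<Rightarrow> real^'k::finite^'d"
    and \<theta> :: "nat \<Rightarrow> real^'k"
    and T M :: nat
  assumes "2 * CARD('k) \<le> CARD('d)"
    and "1 \<le> T"
    and "1 \<le> M"
    and "\<forall>i<T. 0 < t i \<and> t i \<le> 1"
    and "stiefel (hcat (H 0) (Y 0))"
    and "\<forall>n\<ge>1. gse_step M T X t (H (n - 1)) (Y (n - 1)) (\<theta> (n - 1)) (H n) (Y n) (\<theta> n)"
  shows "\<forall>n\<ge>1. gse_loss T X t (H n) (Y n) (\<theta> n) \<le> gse_loss T X t (H (n - 1)) (Y (n - 1)) (\<theta> (n - 1))"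
proof (intro allI impI)
  fix n :: nat assume n: "1 \<le> n"
  have tpos: "\<forall>i<T. 0 < t i" using assms(4) by simp
  have st: "stiefel (hcat (H m) (Y m))" for m
  proof (cases m)
    case 0 then show ?thesis using assms(5) by simp
  next
    case (Suc m')
    then have "gse_step M T X t (H (m - 1)) (Y (m - 1)) (\<theta> (m - 1)) (H m) (Y m) (\<theta> m)"
      using assms(6) Suc by (metis le_add1 plus_1_eq_Suc)
    then obtain W S V where "thin_svd (gse_M T X t (H (m - 1)) (Y (m - 1)) (\<theta> (m - 1))) W S V"
      "hcat (H m) (Y m) = W ** transpose V" by (auto simp: gse_step_def)
    then show ?thesis using svd_stiefel by (simp add: stiefel_def)
  qed
  have gs: "gse_step M T X t (H (n - 1)) (Y (n - 1)) (\<theta> (n - 1)) (H n) (Y n) (\<theta> n)"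
    using assms(6) n by simp
  then obtain W S V where svd: "thin_svd (gse_M T X t (H (n - 1)) (Y (n - 1)) (\<theta> (n - 1))) W S V"
      and new: "hcat (H n) (Y n) = W ** transpose V"
      and th: "\<theta> n = theta_update M T X t (H n) (Y n) (\<theta> (n - 1))"
    by (auto simp: gse_step_def)
  have "gse_loss T X t (H n) (Y n) (\<theta> n) \<le> gse_loss T X t (H n) (Y n) (\<theta> (n - 1))"
    unfolding th by (rule step2[OF tpos])
  also have "\<dots> \<le> gse_loss T X t (H (n - 1)) (Y (n - 1)) (\<theta> (n - 1))"
    by (rule step1[OF svd new st])
  finally show "gse_loss T X t (H n) (Y n) (\<theta> n) \<le> gse_loss T X t (H (n - 1)) (Y (n - 1)) (\<theta> (n - 1))" .
qed


end
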